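(* For every $n\ge1$, $\mathcal{C}(T^{mb}_n)=c_n$; that is, the maximally balanced tree with $n$ leaves has the minimum Colless index among all bifurcating trees with $n$ leaves.
   Context: Bifurcating trees: rooted trees in which every internal node has exactly two children; $\mathcal{T}_n$ is the set of isomorphism classes of bifurcating trees with $n$ leaves. For a node $w$, $\kappa_T(w)$ is its number of descendant leaves. The Colless index is $\mathcal{C}(T)=\sum_{v}|\kappa_T(v_1)-\kappa_T(v_2)|$, summed over internal nodes $v$ with children $v_1,v_2$; $c_n=\min\{\mathcal{C}(T):T\in\mathcal{T}_n\}$. A bifurcating tree is maximally balanced if for every internal node the numbers of descendant leaves of its two children differ by at most 1; $T^{mb}_n$ denotes the unique maximally balanced tree with $n$ leaves. *)

theory Defs
  imports Main
begin

text \<open>Rooted bifurcating trees (plane representatives; isomorphism classes are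
  obtained by identifying trees up to swapping children, and all notions below
  are invariant under such swaps).\<close>
datatype btree = Leaf | Node btree btree

fun leaves :: "btree \<Rightarrow> nat" where
  "leaves Leaf = 1"
| "leaves (Node l r) = leaves l + leaves r"

fun colless :: "btree \<Rightarrow> nat" where
  "colless Leaf = 0"
| "colless (Node l r) =
     nat \<bar>int (leaves l) - int (leaves r)\<bar> + colless l + colless r"

definition min_colless :: "nat \<Rightarrow> nat" where
  "min_colless n = Min {colless T | T. leaves T = n}"

fun max_balanced :: "btree \<Rightarrow> bool" where
  "max_balanced Leaf = True"
| "max_balanced (Node l r) =
     (\<bar>int (leaves l) - int (leaves r)\<bar> \<le> 1 \<and> max_balanced l \<and> max_balanced r)"

end

theory Submission
  imports Defs
begin

function f :: "nat \<Rightarrow> nat" where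
  "f n = (if n \<le> 1 then 0 else (n mod 2) + f (n div 2) + f ((n+1) div 2))"
  by auto
termination by (relation "measure id") auto

declare f.simps[simp del]

lemma f01[simp]: "f 0 = 0" "f 1 = 0" "f (Suc 0) = 0" by (simp_all add: f.simps)

lemma f_even: "p > 0 \<Longrightarrow> f (2*p) = 2 * f p"
  by (subst f.simps) auto

lemma f_odd: "p > 0 \<Longrightarrow> f (2*p+1) = 1 + f p + f (p+1)"
  by (subst f.simps) auto

lemma leaves_pos: "leaves T \<ge> 1"
  by (induction T) auto

lemma mb: "max_balanced T \<Longrightarrow> colless T = f (leaves T)"
proof (induction T)
  case Leaf then show ?case by simp
next
  case (Node l r)
  have a: "leaves l \<ge> 1" "leaves r \<ge> 1" using leaves_pos[of l] leaves_pos[of r] by auto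
  let ?n = "leaves l + leaves r"
  have d: "\<bar>int (leaves l) - int (leaves r)\<bar> \<le> 1" using Node.prems by simp
  have fn: "f ?n = ?n mod 2 + f (?n div 2) + f ((?n+1) div 2)"
    using a by (subst f.simps) auto
  have c: "leaves l = leaves r \<or> leaves l = leaves r + 1 \<or> leaves r = leaves l + 1" using d by auto
  moreover have "{leaves l, leaves r} = {?n div 2, (?n+1) div 2}" using c by auto
  moreover have "nat \<bar>int (leaves l) - int (leaves r)\<bar> = ?n mod 2" using c by (elim disjE) (simp_all, presburger+)
  ultimately show ?case using Node fn by (auto simp: doubleton_eq_iff)
qed

lemma ineq_aux: "a + b = n \<Longrightarrow> f n \<le> nat \<bar>int a - int b\<bar> + f a + f b"
proof (induction n arbitrary: a b rule: less_induct)
  case (less n)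
  show ?case
  proof (cases "n \<le> 1")
    case True
    then have "n = 0 \<or> n = 1" by auto
    then show ?thesis by auto
  next
    case False
    consider (ee) p q where "a = 2*p" "b = 2*q"
      | (oo) p q where "a = 2*p+1" "b = 2*q+1"
      | (oe) p q where "a = 2*p+1" "b = 2*q"
      | (eo) p q where "a = 2*p" "b = 2*q+1"
      by (metis oddE evenE)
    then show ?thesis
    proof cases
      case ee
      have "f (p+q) \<le> nat \<bar>int p - int q\<bar> + f p + f q"
        using less.IH[of "p+q" p q] less.prems False ee by auto
      moreover have "n = 2*(p+q)" using ee less.prems by simp
      moreover have "f (2*(p+q)) = 2 * f (p+q)" using False \<open>n = 2*(p+q)\<close> by (intro f_even) auto
      ultimately show ?thesis using ee f_even[of p] f_even[of q]
        by (cases "p = 0"; cases "q = 0"; auto)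
    next
      case oo
      have n: "n = 2*(p+q+1)" using oo less.prems by simp
      have h1: "f (p+q+1) \<le> nat \<bar>int (p+1) - int q\<bar> + f (p+1) + f q"
        using less.IH[of "p+q+1" "p+1" q] n by auto
      have h2: "f (p+q+1) \<le> nat \<bar>int p - int (q+1)\<bar> + f p + f (q+1)"
        using less.IH[of "p+q+1" p "q+1"] n by auto
      have "f n = 2 * f (p+q+1)" using n f_even[of "p+q+1"] by simp
      moreover have "f a = (if p = 0 then 0 else 1 + f p + f (p+1))" using oo f_odd[of p] by auto
      moreover have "f b = (if q = 0 then 0 else 1 + f q + f (q+1))" using oo f_odd[of q] by auto
      ultimately show ?thesis using h1 h2 oo by auto
    next
      case oe
      have n: "n = 2*(p+q)+1" using oe less.prems by simp
      then have pq: "p + q > 0" using False by auto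
      have h1: "f (p+q+1) \<le> nat \<bar>int (p+1) - int q\<bar> + f (p+1) + f q"
        using less.IH[of "p+q+1" "p+1" q] n pq by auto
      have h2: "f (p+q) \<le> nat \<bar>int p - int q\<bar> + f p + f q"
        using less.IH[of "p+q" p q] n by auto
      have "f n = 1 + f (p+q) + f (p+q+1)" using n f_odd[of "p+q"] pq by simp
      moreover have "f a = (if p = 0 then 0 else 1 + f p + f (p+1))" using oe f_odd[of p] by auto
      moreover have "f b = 2 * f q" using oe f_even[of q] by (cases "q = 0") auto
      moreover have "nat \<bar>int a - int b\<bar> = nat \<bar>int (p+1) - int q\<bar> + nat \<bar>int p - int q\<bar>"
        using oe by auto
      ultimately show ?thesis using h1 h2 oe pq by (cases "p = 0") auto
    next
      case eo
      have n: "n = 2*(p+q)+1" using eo less.prems by simp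
      then have pq: "p + q > 0" using False by auto
      have h1: "f (p+q+1) \<le> nat \<bar>int p - int (q+1)\<bar> + f p + f (q+1)"
        using less.IH[of "p+q+1" p "q+1"] n pq by auto
      have h2: "f (p+q) \<le> nat \<bar>int p - int q\<bar> + f p + f q"
        using less.IH[of "p+q" p q] n by auto
      have "f n = 1 + f (p+q) + f (p+q+1)" using n f_odd[of "p+q"] pq by simp
      moreover have "f b = (if q = 0 then 0 else 1 + f q + f (q+1))" using eo f_odd[of q] by auto
      moreover have "f a = 2 * f p" using eo f_even[of p] by (cases "p = 0") auto
      moreover have "nat \<bar>int a - int b\<bar> = nat \<bar>int p - int (q+1)\<bar> + nat \<bar>int p - int q\<bar>"
        using eo by auto
      ultimately show ?thesis using h1 h2 eo pq by (cases "q = 0") auto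
    qed
  qed
qed

lemma lower: "f (leaves T) \<le> colless T"
proof (induction T)
  case Leaf then show ?case by simp
next
  case (Node l r)
  have "f (leaves l + leaves r) \<le> nat \<bar>int (leaves l) - int (leaves r)\<bar> + f (leaves l) + f (leaves r)"
    by (rule ineq_aux) simp
  then show ?case using Node by simp
qed

lemma upper: "colless T \<le> leaves T * leaves T"
proof (induction T)
  case Leaf then show ?case by simp
next
  case (Node l r)
  have a: "leaves l \<ge> 1" "leaves r \<ge> 1" using leaves_pos[of l] leaves_pos[of r] by auto
  have "nat \<bar>int (leaves l) - int (leaves r)\<bar> \<le> 2 * leaves l * leaves r"
  proof -
    have "leaves l * 1 \<le> leaves l * leaves r" using a by (intro mult_le_mono2) auto
    moreover have "1 * leaves r \<le> leaves l * leaves r" using a by (intro mult_le_mono1) auto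
    moreover have "nat \<bar>int (leaves l) - int (leaves r)\<bar> \<le> leaves l + leaves r" by auto
    ultimately show ?thesis by linarith
  qed
  then show ?case using Node by (simp add: algebra_simps)
qed

theorem theorem1:
  fixes n :: nat and T :: btree
  assumes "n \<ge> 1" and "leaves T = n" and "max_balanced T"
  shows "colless T = min_colless n"
proof -
  let ?S = "{colless T | T. leaves T = n}"
  have fin: "finite ?S"
    by (rule finite_subset[of _ "{..n*n}"]) (auto intro: upper[THEN order_trans])
  have "Min ?S = colless T"
  proof (rule Min_eqI[OF fin])
    fix y assume "y \<in> ?S"
    then obtain T' where "y = colless T'" "leaves T' = n" by auto
    then show "colless T \<le> y" using mb[OF assms(3)] lower[of T'] assms(2) by simp
  next
    show "colless T \<in> ?S" using assms(2) by auto
  qed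
  then show ?thesis unfolding min_colless_def by simp
qed

end
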